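(* If $X$ is a regular set star Hurewicz space, then every closed discrete subspace of $X$ has cardinality less than $\mathfrak c$. Hence $e(X)\leq\mathfrak c$.
   Context: For a family $\mathcal U$ of subsets of $X$ and $A\subseteq X$, $st(A,\mathcal U)=\bigcup\{U\in\mathcal U: U\cap A\neq\emptyset\}$. $X$ is set star Hurewicz if for every nonempty $A\subseteq X$ and every sequence $(\mathcal U_n:n\in\omega)$ of families of open subsets with $\overline A\subseteq\bigcup\mathcal U_n$ for all $n$, there are finite $\mathcal V_n\subseteq\mathcal U_n$ such that every $x\in A$ belongs to $st(\bigcup\mathcal V_n,\mathcal U_n)$ for all but finitely many $n$. $e(X)$ is the supremum of cardinalities of closed discrete subsets; $\mathfrak c=2^{\aleph_0}$. *)

theory Defs
  imports "HOL-Analysis.Analysis" "HOL-Library.Equipollence"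
begin

definition star :: "'a set \<Rightarrow> 'a set set \<Rightarrow> 'a set" where
  "star A \<U> = \<Union>{U \<in> \<U>. U \<inter> A \<noteq> {}}"

definition set_star_Hurewicz :: "'a topology \<Rightarrow> bool" where
  "set_star_Hurewicz X \<longleftrightarrow>
     (\<forall>A \<U>. A \<noteq> {} \<and> A \<subseteq> topspace X \<and>
            (\<forall>n. (\<forall>U \<in> \<U> n. openin X U) \<and> X closure_of A \<subseteq> \<Union>(\<U> n)) \<longrightarrow>
        (\<exists>\<V> :: nat \<Rightarrow> 'a set set.
            (\<forall>n. finite (\<V> n) \<and> \<V> n \<subseteq> \<U> n) \<and>
            (\<forall>x \<in> A. \<forall>\<^sub>F n in sequentially. x \<in> star (\<Union>(\<V> n)) (\<U> n))))"

end

theory Submission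
  imports Defs
begin

lemma not_lesspoll_imp_lepoll:
  assumes "\<not> (A \<prec> B)" shows "B \<lesssim> A"
proof -
  have "(card_of A, card_of B) \<in> ordLeq \<or> (card_of B, card_of A) \<in> ordLeq"
    by (rule ordLeq_total) (simp_all add: card_of_Well_order)
  then show ?thesis
  proof
    assume "(card_of A, card_of B) \<in> ordLeq"
    then have "A \<lesssim> B" unfolding lepoll_def using card_of_ordLeq by blast
    then have "A \<approx> B" using assms lepoll_iff_leqpoll by blast
    then show ?thesis by (simp add: eqpoll_imp_lepoll eqpoll_sym)
  next
    assume "(card_of B, card_of A) \<in> ordLeq"
    then show ?thesis unfolding lepoll_def using card_of_ordLeq by blast
  qed
qed

definition enc :: "nat + (nat \<times> nat) + (nat \<times> nat \<times> nat) \<Rightarrow> nat" where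
  "enc = to_nat"

lemma inj_enc: "inj enc"
  unfolding enc_def by simp

definition ell :: "nat set \<Rightarrow> nat \<Rightarrow> nat" where
  "ell t n = card {k. enc (Inr (Inl (n,k))) \<in> t}"

definition cc :: "nat set \<Rightarrow> nat \<Rightarrow> nat \<Rightarrow> nat set" where
  "cc t n k = {m. enc (Inr (Inr (n,k,m))) \<in> t}"

definition mk :: "nat set \<Rightarrow> (nat \<Rightarrow> nat) \<Rightarrow> (nat \<Rightarrow> nat \<Rightarrow> nat set) \<Rightarrow> nat set" where
  "mk S l c = enc ` (Inl ` S \<union> Inr ` Inl ` {(n,k). k < l n} \<union> Inr ` Inr ` {(n,k,m). m \<in> c n k})"

lemma mem_mk: "enc z \<in> mk S l c \<longleftrightarrow> z \<in> Inl ` S \<union> Inr ` Inl ` {(n,k). k < l n} \<union> Inr ` Inr ` {(n,k,m). m \<in> c n k}"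
  unfolding mk_def using inj_enc by (simp add: inj_image_mem_iff)

lemma ell_mk: "ell (mk S l c) = l"
proof
  fix n
  have "{k. enc (Inr (Inl (n,k))) \<in> mk S l c} = {..<l n}"
    by (auto simp: mem_mk)
  then show "ell (mk S l c) n = l n" by (simp add: ell_def)
qed

lemma cc_mk: "cc (mk S l c) = c"
  by (intro ext) (auto simp: cc_def mem_mk)

lemma free_mk: "{j. enc (Inl j) \<in> mk S l c} = S"
  by (auto simp: mem_mk)

lemma inj_mk: "inj (\<lambda>S. mk S l c)"
proof (rule injI)
  fix S S' assume "mk S l c = mk S' l c"
  then have "{j. enc (Inl j) \<in> mk S l c} = {j. enc (Inl j) \<in> mk S' l c}" by simp
  then show "S = S'" by (simp only: free_mk)
qed

lemma uncountable_nat_sets: "uncountable (UNIV :: nat set set)"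
proof
  assume "countable (UNIV :: nat set set)"
  then have "countable (UNIV :: real set)"
    by (rule countable_eqpoll[OF _ eqpoll_sym[OF nat_sets_eqpoll_reals]])
  then show False using uncountable_UNIV_real by simp
qed

lemma exists_mk_avoid:
  assumes "countable C" shows "\<exists>S. mk S l c \<notin> C"
proof (rule ccontr)
  assume "\<not> ?thesis"
  then have "range (\<lambda>S. mk S l c) \<subseteq> C" by auto
  then have "countable (range (\<lambda>S. mk S l c))" using assms countable_subset by blast
  then have "countable (UNIV :: nat set set)"
    by (rule countable_image_inj_on[OF _ inj_mk])
  then show False using uncountable_nat_sets by simp
qed

theorem theorem4p2:
  fixes X :: "'a topology" and D :: "'a set"
  assumes "regular_space X" and "set_star_Hurewicz X"
    and "closedin X D" and "subtopology X D = discrete_topology D"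
  shows "D \<prec> (UNIV :: real set)"
proof (rule ccontr)
  assume nl: "\<not> D \<prec> (UNIV :: real set)"
  have "(UNIV :: nat set set) \<lesssim> D"
    using not_lesspoll_imp_lepoll[OF nl] nat_sets_eqpoll_reals lepoll_trans1 by blast
  then obtain \<psi> :: "nat set \<Rightarrow> 'a" where injpsi: "inj \<psi>" and psiD: "range \<psi> \<subseteq> D"
    unfolding lepoll_def by blast
  have clD: "closedin X S" if "S \<subseteq> D" for S
    using closedin_trans_full[of X D S] assms(3,4) that by simp
  have DX: "D \<subseteq> topspace X" using assms(3) closedin_subset by blast
  have "\<forall>x\<in>D. \<exists>U V. openin X U \<and> openin X V \<and> x \<in> U \<and> D - {x} \<subseteq> V \<and> disjnt U V"
  proof
    fix x assume "x \<in> D"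
    then have "closedin X (D - {x})" "x \<in> topspace X - (D - {x})" using clD DX by auto
    then show "\<exists>U V. openin X U \<and> openin X V \<and> x \<in> U \<and> D - {x} \<subseteq> V \<and> disjnt U V"
      using assms(1) unfolding regular_space_def by blast
  qed
  then obtain UU VV where UV: "\<And>x. x \<in> D \<Longrightarrow> openin X (UU x) \<and> openin X (VV x) \<and> x \<in> UU x \<and> D - {x} \<subseteq> VV x \<and> disjnt (UU x) (VV x)"
    by metis
  define G where "G n t = (\<lambda>k. cc t n k) ` {..< ell t n}" for n t
  define W where "W n t = UU (\<psi> t) \<inter> (\<Inter>e\<in>G n t - {t}. VV (\<psi> e))" for n t
  have psiDt: "\<psi> t \<in> D" for t using psiD by auto
  have UUo: "openin X (UU (\<psi> t))" for t using UV[OF psiDt[of t]] by simp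
  have VVo: "openin X (VV (\<psi> t))" for t using UV[OF psiDt[of t]] by simp
  have UUm: "\<psi> t \<in> UU (\<psi> t)" for t using UV[OF psiDt[of t]] by simp
  have VVs: "D - {\<psi> t} \<subseteq> VV (\<psi> t)" for t using UV[OF psiDt[of t]] by simp
  have UVd: "UU (\<psi> t) \<inter> VV (\<psi> t) = {}" for t using UV[OF psiDt[of t]] by (simp add: disjnt_def)
  have psiVV: "\<psi> t \<in> VV (\<psi> e)" if "e \<noteq> t" for e t
  proof -
    have "\<psi> e \<noteq> \<psi> t" using that by (simp add: inj_eq[OF injpsi])
    then have "\<psi> t \<in> D - {\<psi> e}" using psiDt[of t] by simp
    then show ?thesis using VVs[of e] by (rule subsetD[rotated])
  qed
  have Wopen: "openin X (W n t)" for n t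
  proof (cases "G n t - {t} = {}")
    case True
    have "W n t = UU (\<psi> t)" unfolding W_def True by simp
    then show ?thesis using UUo by simp
  next
    case False
    have fin: "finite (G n t - {t})" by (simp add: G_def)
    have "openin X (\<Inter>e\<in>G n t - {t}. VV (\<psi> e))"
      by (rule openin_INT2[OF fin False]) (rule VVo)
    then show ?thesis unfolding W_def using UUo by (rule openin_Int[rotated])
  qed
  have Wmem: "\<psi> t \<in> W n t" for n t
  proof -
    have "\<psi> t \<in> (\<Inter>e\<in>G n t - {t}. VV (\<psi> e))" using psiVV by simp
    then show ?thesis unfolding W_def using UUm by simp
  qed
  have WU: "W n t \<subseteq> UU (\<psi> t)" for n t unfolding W_def by (rule Int_lower1)
  have Wuniq: "s = t" if "\<psi> t \<in> W n s" for n s t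
  proof (rule ccontr)
    assume "s \<noteq> t"
    then have "\<psi> t \<in> VV (\<psi> s)" by (rule psiVV)
    moreover have "\<psi> t \<in> UU (\<psi> s)" using that WU by (rule subsetD[rotated])
    ultimately show False using UVd[of s] by blast
  qed
  have Wdisj: "W n t \<inter> W n e = {}" if "e \<in> G n t" "e \<noteq> t" for n t e
  proof -
    have "e \<in> G n t - {t}" using that by simp
    then have "(\<Inter>e'\<in>G n t - {t}. VV (\<psi> e')) \<subseteq> VV (\<psi> e)" by (rule INT_lower)
    then have "W n t \<subseteq> VV (\<psi> e)" unfolding W_def by (rule le_infI2)
    then show ?thesis using WU[of n e] UVd[of e] by blast
  qed
  have injW: "inj (W n)" for n
  proof (rule injI)
    fix x y assume "W n x = W n y"
    then have "\<psi> x \<in> W n y" using Wmem[of x n] by simp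
    then show "x = y" by (rule Wuniq[THEN sym])
  qed
  define A where "A = range \<psi>"
  have Acl: "X closure_of A = A" unfolding A_def by (rule closure_of_closedin[OF clD[OF psiD]])
  have hyp: "A \<noteq> {} \<and> A \<subseteq> topspace X \<and>
            (\<forall>n. (\<forall>U \<in> range (W n). openin X U) \<and> X closure_of A \<subseteq> \<Union>(range (W n)))"
  proof (intro conjI allI)
    show "A \<noteq> {}" unfolding A_def by simp
    show "A \<subseteq> topspace X" unfolding A_def using psiD DX by blast
    fix n
    show "\<forall>U \<in> range (W n). openin X U" using Wopen by blast
    show "X closure_of A \<subseteq> \<Union>(range (W n))" unfolding Acl unfolding A_def
    proof
      fix x assume "x \<in> range \<psi>"
      then obtain t where "x = \<psi> t" by blast
      then have "x \<in> W n t" using Wmem by simp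
      then show "x \<in> \<Union>(range (W n))" by blast
    qed
  qed
  obtain \<V> :: "nat \<Rightarrow> 'a set set" where Vfin: "\<And>n. finite (\<V> n)" and Vsub: "\<And>n. \<V> n \<subseteq> range (W n)"
    and Vev: "\<forall>x \<in> A. \<forall>\<^sub>F n in sequentially. x \<in> star (\<Union>(\<V> n)) (range (W n))"
    using mp[OF spec[OF spec[OF set_star_Hurewicz_def[THEN iffD1, OF assms(2)], of A], of "\<lambda>n. range (W n)"] hyp]
    by blast
  define F where "F n = W n -` \<V> n" for n
  have Ffin: "finite (F n)" for n unfolding F_def using Vfin injW by (rule finite_vimageI)
  define xs where "xs n = (SOME l. set l = F n)" for n
  have xs: "set (xs n) = F n" for n
    unfolding xs_def by (rule someI_ex) (rule finite_list[OF Ffin])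
  define l0 where "l0 n = length (xs n)" for n
  define c0 where "c0 n k = xs n ! k" for n k
  have C: "countable (\<Union>n. F n)" using Ffin by (simp add: countable_finite)
  obtain S where S: "mk S l0 c0 \<notin> (\<Union>n. F n)" using exists_mk_avoid[OF C] by blast
  define ts where "ts = mk S l0 c0"
  have Gts: "G n ts = F n" for n
    unfolding G_def ts_def ell_mk cc_mk l0_def c0_def using xs[of n]
    by (auto simp: set_conv_nth)
  have "\<forall>\<^sub>F n in sequentially. \<psi> ts \<in> star (\<Union>(\<V> n)) (range (W n))"
    using Vev unfolding A_def by blast
  then obtain N where "\<forall>n\<ge>N. \<psi> ts \<in> star (\<Union>(\<V> n)) (range (W n))"
    unfolding eventually_sequentially by blast
  then obtain n where "\<psi> ts \<in> star (\<Union>(\<V> n)) (range (W n))" by blast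
  then obtain s where s1: "\<psi> ts \<in> W n s" and s2: "W n s \<inter> \<Union>(\<V> n) \<noteq> {}"
    unfolding star_def by blast
  have "s = ts" using Wuniq s1 by blast
  then obtain V where V: "V \<in> \<V> n" "W n ts \<inter> V \<noteq> {}" using s2 by blast
  then obtain e where e: "V = W n e" using Vsub by blast
  then have eF: "e \<in> F n" unfolding F_def using V by simp
  then have "e \<noteq> ts" using S ts_def by blast
  moreover have "e \<in> G n ts" using Gts eF by simp
  ultimately show False using Wdisj V e by blast
qed

end
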